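(* $$\max_{U_1,U_2\in\mathcal R}\ \langle 2|U_2\,\mathcal M_2(U_1|1\rangle\langle 1|U_1^\dagger)\,U_2^\dagger|2\rangle=\frac12 .$$
   Context: Basis of $\mathbb C^3$: $|1\rangle,|2\rangle,|3\rangle$ (standard basis). Spin-1 matrices in this basis: $J_y=\frac{1}{\sqrt2}\begin{pmatrix}0&-i&0\\ i&0&-i\\ 0&i&0\end{pmatrix}$, $J_z=\mathrm{diag}(1,0,-1)$. Define $Z(\alpha,\beta,\gamma)=e^{-i\alpha J_z}e^{-i\beta J_y}e^{-i\gamma J_z}$. Let $\mathcal R=\{Z(\alpha,\beta,\gamma):\alpha,\beta,\gamma\in\mathbb R\}\subset U(3)$. For $j\in\{1,2\}$ let $P_j=|j\rangle\langle j|$ and $\mathcal M_j(\rho)=P_j\rho P_j+(\mathbb I-P_j)\rho(\mathbb I-P_j)$ (non-selective measurement of the population of $|j\rangle$). *)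

theory Defs
  imports "HOL-Analysis.Analysis"
begin

text \<open>3x3 complex matrices, indexed by the finite type 3. The basis vectors
|1>, |2>, |3> correspond to the indices 1, 2, 3 of type 3 (note 3 = 0 in type 3).\<close>

type_synonym cmat3 = "complex^3^3"

definition Jy :: cmat3 where
  "Jy = (\<chi> i j.
      if i = 1 \<and> j = 2 then - \<i> / sqrt 2
      else if i = 2 \<and> j = 1 then \<i> / sqrt 2
      else if i = 2 \<and> j = 3 then - \<i> / sqrt 2
      else if i = 3 \<and> j = 2 then \<i> / sqrt 2
      else 0)"

definition Jz :: cmat3 where
  "Jz = (\<chi> i j. if i = j then (if i = 1 then 1 else if i = 2 then 0 else -1) else 0)"

fun mpow :: "cmat3 \<Rightarrow> nat \<Rightarrow> cmat3" where
  "mpow A 0 = mat 1"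
| "mpow A (Suc n) = A ** mpow A n"

definition mexp :: "cmat3 \<Rightarrow> cmat3" where
  "mexp A = (\<chi> i j. (\<Sum>n. mpow A n $ i $ j / of_nat (fact n)))"

definition msc :: "complex \<Rightarrow> cmat3 \<Rightarrow> cmat3" where
  "msc c A = (\<chi> i j. c * A $ i $ j)"

definition Zrot :: "real \<Rightarrow> real \<Rightarrow> real \<Rightarrow> cmat3" where
  "Zrot \<alpha> \<beta> \<gamma> = mexp (msc (- \<i> * complex_of_real \<alpha>) Jz) ** mexp (msc (- \<i> * complex_of_real \<beta>) Jy)
                 ** mexp (msc (- \<i> * complex_of_real \<gamma>) Jz)"

definition Rset :: "cmat3 set" where
  "Rset = {Zrot \<alpha> \<beta> \<gamma> | \<alpha> \<beta> \<gamma>. True}"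

definition adj :: "cmat3 \<Rightarrow> cmat3" where
  "adj U = (\<chi> i j. cnj (U $ j $ i))"

definition proj :: "3 \<Rightarrow> cmat3" where
  "proj k = (\<chi> i j. if i = k \<and> j = k then 1 else 0)"

definition Meas :: "3 \<Rightarrow> cmat3 \<Rightarrow> cmat3" where
  "Meas k \<rho> = proj k ** \<rho> ** proj k + (mat 1 - proj k) ** \<rho> ** (mat 1 - proj k)"

definition fval :: "cmat3 \<Rightarrow> cmat3 \<Rightarrow> complex" where
  "fval U1 U2 = (U2 ** Meas 2 (U1 ** proj 1 ** adj U1) ** adj U2) $ 2 $ 2"

end

theory Submission
  imports Defs
begin
lemma exp_sums: "(\<lambda>n. z^n / fact n) sums exp (z::complex)"
  using exp_converges[of z] by (simp add: divide_inverse scaleR_conv_of_real mult.commute)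
definition Sc :: "nat \<Rightarrow> real" where "Sc n = sin_coeff n * fact n"
definition Cc :: "nat \<Rightarrow> real" where "Cc n = cos_coeff n * fact n"
lemma Sc_Suc: "Sc (Suc n) = Cc n" unfolding Sc_def Cc_def by (simp add: sin_coeff_Suc)
lemma Cc_Suc: "Cc (Suc n) = - Sc n" unfolding Sc_def Cc_def by (simp add: cos_coeff_Suc)
lemma Sc_0: "Sc 0 = 0" and Cc_0: "Cc 0 = 1" by (simp_all add: Sc_def Cc_def)
lemma sin_sums: "(\<lambda>n. complex_of_real (Sc n * b^n) / fact n) sums complex_of_real (sin b)"
proof -
  have "(\<lambda>n. Sc n * b^n / fact n) sums sin b"
    using sin_converges[of b] by (simp add: Sc_def)
  moreover have eq: "\<And>n. complex_of_real (Sc n * b^n) / fact n = of_real (Sc n * b ^ n / fact n)" by simp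
  ultimately show ?thesis using sums_of_real by (simp only: eq) blast
qed
lemma cos_sums: "(\<lambda>n. complex_of_real (Cc n * b^n) / fact n) sums complex_of_real (cos b)"
proof -
  have "(\<lambda>n. Cc n * b^n / fact n) sums cos b"
    using cos_converges[of b] by (simp add: Cc_def)
  moreover have eq: "\<And>n. complex_of_real (Cc n * b^n) / fact n = of_real (Cc n * b ^ n / fact n)" by simp
  ultimately show ?thesis using sums_of_real by (simp only: eq) blast
qed
lemma d0_sums: "(\<lambda>n. (if n = 0 then 1 else 0) / (fact n :: complex)) sums 1"
proof -
  have "(\<lambda>n. (if n = 0 then 1 else 0) / (fact n :: complex)) = (\<lambda>n. if n = 0 then 1 else 0)"
    by auto
  then show ?thesis using sums_single[of 0 "\<lambda>_. 1::complex"] by (simp add: if_distrib)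
qed

lemma mpow_Jz: "mpow (msc c Jz) n = (\<chi> i j. if i = j then (if i = 1 then c^n else if i = 2 then 0^n else (-c)^n) else 0)"
proof (induction n)
  case 0
  show ?case by (simp add: mat_def vec_eq_iff)
next
  case (Suc n)
  show ?case
    apply (simp only: mpow.simps Suc.IH)
    apply (simp add: matrix_matrix_mult_def sum_3 vec_eq_iff msc_def Jz_def)
    apply (simp add: forall_3)
    done
qed

definition r2 :: complex where "r2 = complex_of_real (sqrt 2)"
lemma r2_sq: "r2 * r2 = 2" unfolding r2_def of_real_mult[symmetric] by simp
lemma r2_nz: "r2 \<noteq> 0" unfolding r2_def by simp

definition Km :: "3 \<Rightarrow> 3 \<Rightarrow> complex" where
 "Km i j = (if i = 1 \<and> j = 2 then - 1/r2 else if i = 2 \<and> j = 1 then 1/r2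
   else if i = 2 \<and> j = 3 then -1/r2 else if i = 3 \<and> j = 2 then 1/r2 else 0)"
definition K2m :: "3 \<Rightarrow> 3 \<Rightarrow> complex" where
 "K2m i j = (if i = 2 \<and> j = 2 then -1 else if i = 2 \<or> j = 2 then 0 else if i = j then -1/2 else 1/2)"

lemma Jy_r2: "Jy = (\<chi> i j.
      if i = 1 \<and> j = 2 then - \<i> / r2
      else if i = 2 \<and> j = 1 then \<i> / r2
      else if i = 2 \<and> j = 3 then - \<i> / r2
      else if i = 3 \<and> j = 2 then \<i> / r2
      else 0)" unfolding Jy_def r2_def by simp

lemma mpow_Jy: "mpow (msc (- \<i> * complex_of_real b) Jy) n = (\<chi> i j.
   (if n = 0 then 1 else 0) * ((if i = j then 1 else 0) + K2m i j)
   + complex_of_real (Sc n * b^n) * Km i j - complex_of_real (Cc n * b^n) * K2m i j)"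
proof (induction n)
  case 0
  show ?case by (simp add: mat_def vec_eq_iff Sc_0 Cc_0)
next
  case (Suc n)
  show ?case
    apply (simp only: mpow.simps Suc.IH)
    apply (simp add: matrix_matrix_mult_def sum_3 vec_eq_iff msc_def Jy_r2 Sc_Suc Cc_Suc)
    apply (simp add: forall_3 Km_def K2m_def)
    apply (cases "n = 0")
    apply (simp_all add: field_simps r2_sq r2_nz)
    done
qed

lemma exp_suminf: "(\<Sum>n. z^n / fact n) = exp (z::complex)"
  using sums_unique[OF exp_sums] by simp

lemma mexp_Jz: "mexp (msc c Jz) = (\<chi> i j. if i = j then (if i=1 then exp c else if i=2 then 1 else exp (-c)) else 0)"
  unfolding mexp_def mpow_Jz
  apply (simp add: vec_eq_iff)
  apply (intro allI)
  apply (case_tac "i = j")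
   apply (simp_all add: exp_suminf)
  done

lemma comb_sums: "(\<lambda>n. ((if n=0 then 1 else 0)*a + complex_of_real(Sc n*b^n)*k - complex_of_real(Cc n * b^n)*k2)/fact n)
   sums (a + complex_of_real(sin b)*k - complex_of_real(cos b)*k2)"
proof -
  have "(\<lambda>n. (if n=0 then 1 else 0)/(fact n::complex) * a + complex_of_real(Sc n*b^n)/fact n*k - complex_of_real(Cc n * b^n)/fact n*k2)
   sums (1 * a + complex_of_real(sin b)*k - complex_of_real(cos b)*k2)"
    by (intro sums_add sums_diff sums_mult2 d0_sums sin_sums cos_sums)
  moreover have "(\<lambda>n. (if n=0 then 1 else 0)/(fact n::complex) * a + complex_of_real(Sc n*b^n)/fact n*k - complex_of_real(Cc n * b^n)/fact n*k2)
    = (\<lambda>n. ((if n=0 then 1 else 0)*a + complex_of_real(Sc n*b^n)*k - complex_of_real(Cc n * b^n)*k2)/fact n)"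
    by (rule ext) (simp add: add_divide_distrib diff_divide_distrib)
  ultimately show ?thesis by simp
qed

lemma mexp_Jy: "mexp (msc (- \<i> * complex_of_real b) Jy) = (\<chi> i j.
   ((if i = j then 1 else 0) + K2m i j) + complex_of_real (sin b) * Km i j - complex_of_real (cos b) * K2m i j)"
  unfolding mexp_def mpow_Jy
  apply (simp only: vec_eq_iff vec_lambda_beta of_nat_fact)
  apply (intro allI)
  apply (rule sums_unique[OF comb_sums, symmetric])
  done

lemma fval_formula: "fval U1 U2 = (U2$2$2 * cnj (U2$2$2)) * (U1$2$1 * cnj (U1$2$1))
   + (U2$2$1 * U1$1$1 + U2$2$3 * U1$3$1) * cnj (U2$2$1 * U1$1$1 + U2$2$3 * U1$3$1)"
  unfolding fval_def Meas_def
  by (simp add: matrix_matrix_mult_def sum_3 proj_def adj_def mat_def algebra_simps)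

definition Rb :: "real \<Rightarrow> 3 \<Rightarrow> 3 \<Rightarrow> complex" where
  "Rb b i j = ((if i = j then 1 else 0) + K2m i j) + complex_of_real (sin b) * Km i j - complex_of_real (cos b) * K2m i j"
definition dz :: "real \<Rightarrow> 3 \<Rightarrow> complex" where
  "dz a i = (if i = 1 then exp (- \<i> * complex_of_real a) else if i = 2 then 1 else exp (- (- \<i> * complex_of_real a)))"

lemma Zrot_entry: "Zrot a b g $ i $ j = dz a i * Rb b i j * dz g j"
  unfolding Zrot_def mexp_Jz mexp_Jy
  apply (simp add: matrix_matrix_mult_def sum_3 dz_def Rb_def)
  using exhaust_3[of i] exhaust_3[of j] by auto

lemma norm_dz: "cmod (dz a i) = 1" unfolding dz_def by simp

lemma Rb_vals: "Rb b 1 1 = (1 + complex_of_real (cos b))/2" "Rb b 2 1 = complex_of_real (sin b) / r2"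
  "Rb b 3 1 = (1 - complex_of_real (cos b))/2" "Rb b 2 2 = complex_of_real (cos b)" "Rb b 2 3 = - complex_of_real (sin b) / r2"
  by (simp_all add: Rb_def Km_def K2m_def field_simps)


lemma cmod_r2: "cmod (z / r2) = cmod z / sqrt 2" unfolding r2_def by (simp add: norm_divide)
lemma cmod_1p: "cmod (1 + complex_of_real x) = \<bar>1 + x\<bar>"
proof -
  have "1 + complex_of_real x = complex_of_real (1+x)" by simp
  then show ?thesis by (simp only: norm_of_real)
qed
lemma cmod_1m: "cmod (1 - complex_of_real x) = \<bar>1 - x\<bar>"
proof -
  have "1 - complex_of_real x = complex_of_real (1-x)" by simp
  then show ?thesis by (simp only: norm_of_real)
qed
lemma entries:
  "cmod (Zrot a b g $ 1 $ 1) = (1 + cos b)/2"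
  "cmod (Zrot a b g $ 2 $ 1) = \<bar>sin b\<bar>/sqrt 2"
  "cmod (Zrot a b g $ 3 $ 1) = (1 - cos b)/2"
  "cmod (Zrot a b g $ 2 $ 2) = \<bar>cos b\<bar>"
  "cmod (Zrot a b g $ 2 $ 3) = \<bar>sin b\<bar>/sqrt 2"
proof -
  have c1: "0 \<le> 1 + cos b" "0 \<le> 1 - cos b" using cos_ge_minus_one[of b] cos_le_one[of b] by linarith+
  have n: "\<And>a i x. cmod (dz a i * x * dz g j) = cmod x" for g j by (simp add: norm_mult norm_dz)
  show "cmod (Zrot a b g $ 1 $ 1) = (1 + cos b)/2"
    unfolding Zrot_entry n Rb_vals norm_divide cmod_1p using c1 by simp
  show "cmod (Zrot a b g $ 3 $ 1) = (1 - cos b)/2"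
    unfolding Zrot_entry n Rb_vals norm_divide cmod_1m using c1 by simp
  show "cmod (Zrot a b g $ 2 $ 1) = \<bar>sin b\<bar>/sqrt 2"
    unfolding Zrot_entry n Rb_vals cmod_r2 by simp
  show "cmod (Zrot a b g $ 2 $ 3) = \<bar>sin b\<bar>/sqrt 2"
    unfolding Zrot_entry n Rb_vals minus_divide_left[symmetric] norm_minus_cancel cmod_r2 by simp
  show "cmod (Zrot a b g $ 2 $ 2) = \<bar>cos b\<bar>"
    unfolding Zrot_entry n Rb_vals by simp
qed

lemma Re_fval: "Re (fval U1 U2) = cmod (U2$2$2)^2 * cmod (U1$2$1)^2 + cmod (U2$2$1 * U1$1$1 + U2$2$3 * U1$3$1)^2"
proof -
  have e: "\<And>z. z * cnj z = complex_of_real (cmod z ^ 2)" using complex_norm_square by simp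
  show ?thesis unfolding fval_formula e
    by (simp only: of_real_mult[symmetric] of_real_add[symmetric] Re_complex_of_real)
qed

lemma upper: "Re (fval (Zrot a1 b1 g1) (Zrot a2 b2 g2)) \<le> 1/2"
proof -
  let ?U1 = "Zrot a1 b1 g1" and ?U2 = "Zrot a2 b2 g2"
  let ?w = "?U2$2$1 * ?U1$1$1 + ?U2$2$3 * ?U1$3$1"
  have "cmod ?w \<le> cmod (?U2$2$1) * cmod (?U1$1$1) + cmod (?U2$2$3) * cmod (?U1$3$1)"
    using norm_triangle_ineq[of "?U2$2$1 * ?U1$1$1" "?U2$2$3 * ?U1$3$1"] by (simp only: norm_mult)
  also have "\<dots> = \<bar>sin b2\<bar>/sqrt 2" unfolding entries by (simp add: field_simps)
  finally have w: "cmod ?w \<le> \<bar>sin b2\<bar>/sqrt 2" .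
  have w2: "cmod ?w ^ 2 \<le> (\<bar>sin b2\<bar>/sqrt 2)^2"
    by (rule power_mono[OF w norm_ge_zero])
  have s2: "(\<bar>sin b2\<bar>/sqrt 2)^2 = (sin b2)^2/2" by (simp add: power_divide)
  have "Re (fval ?U1 ?U2) = (cos b2)^2 * ((sin b1)^2 / 2) + cmod ?w ^ 2"
    unfolding Re_fval entries by (simp add: power_divide)
  also have "\<dots> \<le> (cos b2)^2 * (1 / 2) + (sin b2)^2 / 2"
  proof -
    have "(sin b1)^2 \<le> 1" by (simp add: abs_square_le_1)
    then have "(cos b2)^2 * ((sin b1)^2 / 2) \<le> (cos b2)^2 * (1/2)"
      by (intro mult_left_mono) auto
    then show ?thesis using w2 s2 by linarith
  qed
  also have "\<dots> = 1/2" using sin_cos_squared_add[of b2] by (simp add: field_simps)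
  finally show ?thesis .
qed

lemma Zrot_in: "Zrot a b g \<in> Rset" unfolding Rset_def by blast

lemma attained: "fval (Zrot 0 0 0) (Zrot 0 (pi/2) 0) = 1/2"
proof -
  have c: "cnj r2 = r2" unfolding r2_def by simp
  show ?thesis unfolding fval_formula Zrot_entry Rb_vals
    by (simp add: dz_def field_simps c r2_sq r2_nz)
qed

theorem theorem3:
  shows "(\<forall>U1\<in>Rset. \<forall>U2\<in>Rset. Re (fval U1 U2) \<le> 1/2)
       \<and> (\<exists>U1\<in>Rset. \<exists>U2\<in>Rset. fval U1 U2 = 1/2)"
  using upper attained Zrot_in unfolding Rset_def by blast
end
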